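(* In the setting of the lattice $\mathbb Z^d$ with $\Gamma=p_1\mathbb Z\oplus\dots\oplus p_d\mathbb Z$ ($p_j\ge2$), let $Q:\mathcal V_*\to\mathbb R$ be real, $p=p_1\cdots p_d$, and $\widehat Q(l)=\frac1p\sum_{\mathrm n\in\mathcal V_*}e^{-2\pi i(\frac{l_1n_1}{p_1}+\dots+\frac{l_dn_d}{p_d})}Q(\mathrm n)$ for $l\in\mathcal V_*$. Then $$\mathcal I_1(Q)=p\,\widehat Q(0),\qquad \mathcal I_2(Q)=\frac p2\sum_{\mathrm n\in\mathcal V_*}|\widehat Q(\mathrm n)|^2,$$ and for $j=1,\dots,d$, $$\mathcal I^{\mathfrak e_j}_{p_j+2}(Q)=\mathcal I_2(Q)+\frac{p\,p_j}{2}\sum_{\mathrm n\in\mathcal V_*,\ n_j=0}|\widehat Q(\mathrm n)|^2.$$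
   Context: $\mathcal V_*=\{\mathrm n=(n_1,\dots,n_d)\in\mathbb Z^d:0\le n_j<p_j\}$ is the vertex set of the fundamental graph of $\mathbb Z^d$ (vertices $\mathbb Z^d$, edges $\mathrm n\sim\mathrm n\pm\mathfrak e_j$) modulo $\Gamma$. The fundamental graph has, for each $\mathrm n\in\mathcal V_*$ and $j$, an oriented edge from $\mathrm n$ to the vertex with $n_j$ replaced by $n_j+1\bmod p_j$, of index $\mathfrak e_j$ if $n_j=p_j-1$ and $0$ otherwise, plus reversed edges with negated index. Cycles: closed paths of oriented edges up to cyclic permutation; prime if not an $r$-fold repetition with $r\ge2$; length $|\mathbf c|$; index $\tau(\mathbf c)$ = sum of edge indices. Modified graph $\widetilde{\mathcal G}_*$: add a loop $\mathbf e_v$ of index $0$ at each vertex; weight $\omega(\mathbf c,Q)$ = product of edge weights ($1$ on original edges, $Q(v)$ on $\mathbf e_v$). $\mathcal P,\widetilde{\mathcal P}$: prime cycles of $\mathcal G_*,\widetilde{\mathcal G}_*$. $\mathcal I_n^{\mathrm m}(Q)=\sum\frac1r\omega^r(\mathbf c,Q)$ over $r\in\{1,\dots,n\}$, $\mathbf c\in\widetilde{\mathcal P}\setminus\mathcal P$ with $r|\mathbf c|=n$, $r\tau(\mathbf c)=\mathrm m$; $\mathcal I_n(Q)$ the same sum without the index condition. $\mathfrak e_j$ is the $j$-th standard basis vector. *)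

theory Defs
  imports Complex_Main
begin

(* Coordinates are indexed 0..d-1.  A vertex of the fundamental graph is
   n :: nat => nat with n j < p j for j < d and n j = 0 for j >= d.
   Indices (elements of Z^d) are represented as nat => int. *)

definition verts :: "nat \<Rightarrow> (nat \<Rightarrow> nat) \<Rightarrow> (nat \<Rightarrow> nat) set" where
  "verts d p = {n. (\<forall>j<d. n j < p j) \<and> (\<forall>j\<ge>d. n j = 0)}"

(* Oriented edges: Step v j True is the edge from v to v with n_j replaced by
   n_j+1 mod p_j; Step v j False is the reversed edge of the forward edge
   ending at v (going from v to v with n_j replaced by n_j-1 mod p_j);
   Loop v is the added loop e_v of the modified graph. *)
datatype edge = Step "nat \<Rightarrow> nat" nat bool | Loop "nat \<Rightarrow> nat"

definition orig_edges :: "nat \<Rightarrow> (nat \<Rightarrow> nat) \<Rightarrow> edge set" where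
  "orig_edges d p = {Step v j b | v j b. v \<in> verts d p \<and> j < d}"

definition mod_edges :: "nat \<Rightarrow> (nat \<Rightarrow> nat) \<Rightarrow> edge set" where
  "mod_edges d p = orig_edges d p \<union> {Loop v | v. v \<in> verts d p}"

fun esrc :: "edge \<Rightarrow> (nat \<Rightarrow> nat)" where
  "esrc (Step v j b) = v"
| "esrc (Loop v) = v"

fun etgt :: "(nat \<Rightarrow> nat) \<Rightarrow> edge \<Rightarrow> (nat \<Rightarrow> nat)" where
  "etgt p (Step v j b) =
     (if b then v(j := (v j + 1) mod p j) else v(j := (v j + p j - 1) mod p j))"
| "etgt p (Loop v) = v"

definition unitv :: "nat \<Rightarrow> nat \<Rightarrow> int" where
  "unitv j = (\<lambda>i. if i = j then 1 else 0)"

fun eidx :: "(nat \<Rightarrow> nat) \<Rightarrow> edge \<Rightarrow> nat \<Rightarrow> int" where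
  "eidx p (Step v j b) =
     (if b then (if v j = p j - 1 then unitv j else (\<lambda>_. 0))
           else (if v j = 0 then (\<lambda>i. - unitv j i) else (\<lambda>_. 0)))"
| "eidx p (Loop v) = (\<lambda>_. 0)"

fun eweight :: "((nat \<Rightarrow> nat) \<Rightarrow> real) \<Rightarrow> edge \<Rightarrow> real" where
  "eweight Q (Step v j b) = 1"
| "eweight Q (Loop v) = Q v"

definition closed_path :: "edge set \<Rightarrow> (nat \<Rightarrow> nat) \<Rightarrow> edge list \<Rightarrow> bool" where
  "closed_path E p c \<longleftrightarrow> c \<noteq> [] \<and> set c \<subseteq> E \<and>
     (\<forall>i<length c. etgt p (c ! i) = esrc (c ! ((i + 1) mod length c)))"

(* a cycle is a closed path up to cyclic permutation *)
definition cyc_class :: "edge list \<Rightarrow> edge list set" where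
  "cyc_class c = range (\<lambda>k. rotate k c)"

definition repetition_free :: "edge list \<Rightarrow> bool" where
  "repetition_free c \<longleftrightarrow> \<not> (\<exists>r u. r \<ge> 2 \<and> c = concat (replicate r u))"

definition prime_cycles :: "edge set \<Rightarrow> (nat \<Rightarrow> nat) \<Rightarrow> edge list set set" where
  "prime_cycles E p = cyc_class ` {c. closed_path E p c \<and> repetition_free c}"

definition cyc_rep :: "edge list set \<Rightarrow> edge list" where
  "cyc_rep C = (SOME c. c \<in> C)"

definition cyc_len :: "edge list set \<Rightarrow> nat" where
  "cyc_len C = length (cyc_rep C)"

definition cyc_index :: "(nat \<Rightarrow> nat) \<Rightarrow> edge list set \<Rightarrow> nat \<Rightarrow> int" where
  "cyc_index p C = (\<lambda>i. \<Sum>e\<leftarrow>cyc_rep C. eidx p e i)"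

definition cyc_weight :: "((nat \<Rightarrow> nat) \<Rightarrow> real) \<Rightarrow> edge list set \<Rightarrow> real" where
  "cyc_weight Q C = (\<Prod>e\<leftarrow>cyc_rep C. eweight Q e)"

definition I_terms :: "nat \<Rightarrow> (nat \<Rightarrow> nat) \<Rightarrow> nat \<Rightarrow> (nat \<times> edge list set) set" where
  "I_terms d p n = {(r, C). r \<in> {1..n} \<and>
      C \<in> prime_cycles (mod_edges d p) p - prime_cycles (orig_edges d p) p \<and>
      r * cyc_len C = n}"

definition I_idx :: "nat \<Rightarrow> (nat \<Rightarrow> nat) \<Rightarrow> nat \<Rightarrow> (nat \<Rightarrow> int) \<Rightarrow> ((nat \<Rightarrow> nat) \<Rightarrow> real) \<Rightarrow> real" where
  "I_idx d p n m Q = (\<Sum>x\<in>{x \<in> I_terms d p n. (\<lambda>i. int (fst x) * cyc_index p (snd x) i) = m}.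
       (1 / real (fst x)) * cyc_weight Q (snd x) ^ fst x)"

definition I_all :: "nat \<Rightarrow> (nat \<Rightarrow> nat) \<Rightarrow> nat \<Rightarrow> ((nat \<Rightarrow> nat) \<Rightarrow> real) \<Rightarrow> real" where
  "I_all d p n Q = (\<Sum>x\<in>I_terms d p n. (1 / real (fst x)) * cyc_weight Q (snd x) ^ fst x)"

definition period_prod :: "nat \<Rightarrow> (nat \<Rightarrow> nat) \<Rightarrow> nat" where
  "period_prod d p = (\<Prod>j<d. p j)"

definition Qhat :: "nat \<Rightarrow> (nat \<Rightarrow> nat) \<Rightarrow> ((nat \<Rightarrow> nat) \<Rightarrow> real) \<Rightarrow> (nat \<Rightarrow> nat) \<Rightarrow> complex" where
  "Qhat d p Q l = (1 / of_nat (period_prod d p)) *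
     (\<Sum>n\<in>verts d p. exp (- 2 * pi * \<i> *
        (\<Sum>j<d. of_nat (l j * n j) / of_nat (p j))) * complex_of_real (Q n))"

end

theory Submission
  imports Defs
begin


lemma sum_list_rotate_map: fixes f :: "_ \<Rightarrow> 'b::comm_monoid_add" shows "sum_list (map f (rotate k c)) = sum_list (map f c)"
proof (induction k)
  case 0 then show ?case by simp
next
  case (Suc k)
  have "\<And>xs. sum_list (map f (rotate1 xs)) = sum_list (map f xs)"
    subgoal for xs by (cases xs) (auto simp: ac_simps)
    done
  then show ?case using Suc by (simp add: rotate_Suc)
qed

lemma prod_list_rotate_map: fixes f :: "_ \<Rightarrow> 'b::comm_monoid_mult" shows "prod_list (map f (rotate k c)) = prod_list (map f c)"
proof (induction k)
  case 0 then show ?case by simp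
next
  case (Suc k)
  have "\<And>xs. prod_list (map f (rotate1 xs)) = prod_list (map f xs)"
    subgoal for xs by (cases xs) (auto simp: ac_simps)
    done
  then show ?case using Suc by (simp add: rotate_Suc)
qed

lemma cyc_class_rotate: "cyc_class (rotate m c) = cyc_class c"
proof -
  have "rotate k c \<in> range (\<lambda>k. rotate k (rotate m c))" for k
  proof (cases "c = []")
    case True then show ?thesis by auto
  next
    case False
    let ?N = "length c"
    have N: "?N > 0" using False by simp
    define k' where "k' = ?N - m mod ?N + k"
    have "(k' + m) mod ?N = k mod ?N"
    proof -
      have "k' + m = k + (?N - m mod ?N + m)" unfolding k'_def by simp
      also have "?N - m mod ?N + m = ?N * (Suc (m div ?N))"
      proof -
        have a: "m mod ?N \<le> m" "m mod ?N < ?N" using N by auto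
        have "?N - m mod ?N + m = ?N + (m - m mod ?N)" using a by linarith
        also have "m - m mod ?N = ?N * (m div ?N)" by (simp add: minus_mod_eq_mult_div)
        finally show ?thesis by simp
      qed
      finally have "k' + m = k + ?N * Suc (m div ?N)" .
      then show ?thesis by (metis mod_mult_self1 mult.commute)
    qed
    then have "rotate k c = rotate (k' + m) c" by (metis rotate_conv_mod)
    then show ?thesis by (auto simp: rotate_rotate)
  qed
  moreover have "rotate k (rotate m c) \<in> range (\<lambda>k. rotate k c)" for k
    by (auto simp: rotate_rotate)
  ultimately show ?thesis unfolding cyc_class_def by blast
qed

lemma cyc_class_eq_rot: "cyc_class c = cyc_class c' \<Longrightarrow> \<exists>k. c' = rotate k c"
proof -
  assume "cyc_class c = cyc_class c'"
  moreover have "c' \<in> cyc_class c'" unfolding cyc_class_def by (metis rangeI rotate0 id_apply)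
  ultimately show ?thesis unfolding cyc_class_def by auto
qed

lemma cyc_rep_rot: "\<exists>k. cyc_rep (cyc_class c) = rotate k c"
proof -
  have "c \<in> cyc_class c" unfolding cyc_class_def by (metis rangeI rotate0 id_apply)
  then have "cyc_rep (cyc_class c) \<in> cyc_class c" unfolding cyc_rep_def by (rule someI)
  then show ?thesis unfolding cyc_class_def by auto
qed

lemma cyc_len_class: "cyc_len (cyc_class c) = length c"
  using cyc_rep_rot[of c] unfolding cyc_len_def by auto

lemma cyc_index_class: "cyc_index p (cyc_class c) = (\<lambda>i. \<Sum>e\<leftarrow>c. eidx p e i)"
  using cyc_rep_rot[of c] unfolding cyc_index_def by (auto simp: sum_list_rotate_map)

lemma cyc_weight_class: "cyc_weight Q (cyc_class c) = (\<Prod>e\<leftarrow>c. eweight Q e)"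
  using cyc_rep_rot[of c] unfolding cyc_weight_def by (auto simp: prod_list_rotate_map)

lemma closed_path_rotate:
  assumes "closed_path E p c" shows "closed_path E p (rotate m c)"
proof -
  let ?N = "length c"
  have N: "?N > 0" using assms unfolding closed_path_def by simp
  have "etgt p (rotate m c ! i) = esrc (rotate m c ! ((i + 1) mod ?N))" if "i < ?N" for i
  proof -
    have "etgt p (c ! ((m + i) mod ?N)) = esrc (c ! (((m + i) mod ?N + 1) mod ?N))"
      using assms N unfolding closed_path_def by auto
    moreover have "((m + i) mod ?N + 1) mod ?N = (m + (i + 1) mod ?N) mod ?N"
      by (simp add: mod_simps add.assoc)
    ultimately show ?thesis using that N by (simp add: nth_rotate)
  qed
  then show ?thesis using assms unfolding closed_path_def by auto
qed

lemma loop_not_orig: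
  assumes "Loop v \<in> set c" shows "cyc_class c \<notin> prime_cycles (orig_edges d p) p"
proof
  assume "cyc_class c \<in> prime_cycles (orig_edges d p) p"
  then obtain c' where c': "cyc_class c = cyc_class c'" "closed_path (orig_edges d p) p c'"
    unfolding prime_cycles_def by auto
  then obtain k where "c = rotate k c'" using cyc_class_eq_rot by metis
  then have "set c \<subseteq> orig_edges d p" using c' unfolding closed_path_def by simp
  then show False using assms unfolding orig_edges_def by auto
qed

lemma noloop_orig:
  assumes "closed_path (mod_edges d p) p c" "repetition_free c" "\<forall>v. Loop v \<notin> set c"
  shows "cyc_class c \<in> prime_cycles (orig_edges d p) p"
proof -
  have "set c \<subseteq> orig_edges d p" using assms unfolding closed_path_def mod_edges_def by auto
  then have "closed_path (orig_edges d p) p c" using assms(1) unfolding closed_path_def by auto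
  then show ?thesis using assms(2) unfolding prime_cycles_def by auto
qed

lemma sum_shift_mod:
  fixes f :: "nat \<Rightarrow> 'a::comm_monoid_add"
  assumes "N > 0" shows "(\<Sum>k<N. f ((k + 1) mod N)) = (\<Sum>k<N. f k)"
proof -
  obtain M where M: "N = Suc M" using assms by (cases N) auto
  have "(\<Sum>k<Suc M. f ((k + 1) mod Suc M)) = (\<Sum>k<M. f ((k + 1) mod Suc M)) + f 0"
    by simp
  also have "(\<Sum>k<M. f ((k + 1) mod Suc M)) = (\<Sum>k<M. f (Suc k))"
    by (rule sum.cong) auto
  also have "\<dots> + f 0 = (\<Sum>k<Suc M. f k)" by (simp only: sum.lessThan_Suc_shift add.commute)
  finally show ?thesis using M by simp
qed



lemma mod_edge_cases:
  assumes "e \<in> mod_edges d p"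
  obtains v where "v \<in> verts d p" "e = Loop v"
  | v i b where "v \<in> verts d p" "i < d" "e = Step v i b"
  using assms unfolding mod_edges_def orig_edges_def by auto

lemma step_moves:
  assumes "v \<in> verts d p" "i < d" "p i \<ge> 2"
  shows "etgt p (Step v i b) \<noteq> v"
proof
  assume h: "etgt p (Step v i b) = v"
  have vi: "v i < p i" using assms unfolding verts_def by auto
  show False
  proof (cases b)
    case True
    then have "(v i + 1) mod p i = v i" using h by (metis etgt.simps(1) fun_upd_same)
    then show False
    proof (cases "v i + 1 < p i")
      case True then show False using \<open>(v i + 1) mod p i = v i\<close> by (simp add: mod_less)
    next
      case False
      then have "v i + 1 = p i" using vi by linarith
      then show False using \<open>(v i + 1) mod p i = v i\<close> assms(3) by simp
    qed
  next
    case False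
    then have "(v i + p i - 1) mod p i = v i" using h by (metis etgt.simps(1) fun_upd_same)
    then show False using vi assms(3)
    proof (cases "v i = 0")
      case True then show ?thesis using \<open>(v i + p i - 1) mod p i = v i\<close> assms(3) by simp
    next
      case False
      have "v i + p i - 1 = (v i - 1) + p i" using False by simp
      moreover have "((v i - 1) + p i) mod p i = (v i - 1) mod p i" by (rule mod_add_self2)
      moreover have "(v i - 1) mod p i = v i - 1" using vi by (intro mod_less) linarith
      ultimately have "(v i + p i - 1) mod p i = v i - 1" by argo
      then show ?thesis using \<open>(v i + p i - 1) mod p i = v i\<close> False by linarith
    qed
  qed
qed

lemma finite_verts: "finite (verts d p)"
proof -
  define M where "M = Max (insert 0 (p ` {..<d})) + 1"
  have "verts d p \<subseteq> {f. \<forall>x. (x \<in> {..<d} \<longrightarrow> f x \<in> {..<M}) \<and> (x \<notin> {..<d} \<longrightarrow> f x = 0)}"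
  proof
    fix n assume n: "n \<in> verts d p"
    have "n j < M" if "j < d" for j
    proof -
      have "p j \<le> Max (insert 0 (p ` {..<d}))" using that by (intro Max_ge) auto
      moreover have "n j < p j" using n that unfolding verts_def by auto
      ultimately show ?thesis unfolding M_def by linarith
    qed
    then show "n \<in> {f. \<forall>x. (x \<in> {..<d} \<longrightarrow> f x \<in> {..<M}) \<and> (x \<notin> {..<d} \<longrightarrow> f x = 0)}"
      using n unfolding verts_def by auto
  qed
  moreover have "finite {f. \<forall>x. (x \<in> {..<d} \<longrightarrow> f x \<in> {..<M}) \<and> (x \<notin> {..<d} \<longrightarrow> f x = (0::nat))}"
    by (rule finite_set_of_finite_funs) auto
  ultimately show ?thesis by (rule finite_subset)
qed

lemma closed_len1:
  assumes "closed_path (mod_edges d p) p c" "length c = 1" "\<forall>i<d. p i \<ge> 2"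
  shows "\<exists>v \<in> verts d p. c = [Loop v]"
proof -
  obtain e where c: "c = [e]" using assms(2) by (cases c) auto
  have e: "e \<in> mod_edges d p" and t: "etgt p e = esrc e" using assms(1) c unfolding closed_path_def by auto
  show ?thesis
  proof (cases rule: mod_edge_cases[OF e])
    case (1 v) then show ?thesis using c by auto
  next
    case (2 v i b) then show ?thesis using t step_moves[of v d p i b] assms(3) by auto
  qed
qed

lemma loop_cycle_good:
  assumes "v \<in> verts d p"
  shows "cyc_class [Loop v] \<in> prime_cycles (mod_edges d p) p - prime_cycles (orig_edges d p) p"
proof -
  have "closed_path (mod_edges d p) p [Loop v]" using assms unfolding closed_path_def mod_edges_def by auto
  moreover have "repetition_free [Loop v]"
    unfolding repetition_free_def
  proof
    assume "\<exists>r u. 2 \<le> r \<and> [Loop v] = concat (replicate r u)"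
    then obtain r u where "2 \<le> r" and eq: "[Loop v] = concat (replicate r u)" by auto
    moreover have "length (concat (replicate r u)) = r * length u" by (induction r) auto
    moreover have "length (concat (replicate r u)) = 1" by (simp flip: eq)
    ultimately have "r * length u = 1" by simp
    then have "r = 1" by simp
    then show False using \<open>2 \<le> r\<close> by simp
  qed
  ultimately have "cyc_class [Loop v] \<in> prime_cycles (mod_edges d p) p" unfolding prime_cycles_def by auto
  moreover have "cyc_class [Loop v] \<notin> prime_cycles (orig_edges d p) p" by (rule loop_not_orig) auto
  ultimately show ?thesis by auto
qed

lemma loop_class_inj: "cyc_class [Loop v] = cyc_class [Loop w] \<Longrightarrow> v = w"
  using cyc_class_eq_rot[of "[Loop v]" "[Loop w]"] by auto

lemma prime_class_obtain:
  assumes "C \<in> prime_cycles E p"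
  obtains c where "C = cyc_class c" "closed_path E p c" "repetition_free c"
  using assms unfolding prime_cycles_def by auto

lemma I_terms_1:
  assumes "\<forall>i<d. p i \<ge> 2"
  shows "I_terms d p 1 = (\<lambda>v. (1, cyc_class [Loop v])) ` verts d p"
proof
  show "I_terms d p 1 \<subseteq> (\<lambda>v. (1, cyc_class [Loop v])) ` verts d p"
  proof
    fix x assume x: "x \<in> I_terms d p 1"
    then obtain r C where xr: "x = (r, C)" "r \<in> {1..1}" "C \<in> prime_cycles (mod_edges d p) p" "r * cyc_len C = 1"
      unfolding I_terms_def by auto
    obtain c where c: "C = cyc_class c" "closed_path (mod_edges d p) p c" using xr(3) by (rule prime_class_obtain)
    have "length c = 1" using xr c cyc_len_class by auto
    then obtain v where "v \<in> verts d p" "c = [Loop v]" using closed_len1 c assms by blast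
    then show "x \<in> (\<lambda>v. (1, cyc_class [Loop v])) ` verts d p" using xr c by auto
  qed
next
  show "(\<lambda>v. (1, cyc_class [Loop v])) ` verts d p \<subseteq> I_terms d p 1"
    using loop_cycle_good unfolding I_terms_def by (auto simp: cyc_len_class)
qed

lemma I_terms_2:
  assumes "\<forall>i<d. p i \<ge> 2"
  shows "I_terms d p 2 = (\<lambda>v. (2, cyc_class [Loop v])) ` verts d p"
proof
  show "I_terms d p 2 \<subseteq> (\<lambda>v. (2, cyc_class [Loop v])) ` verts d p"
  proof
    fix x assume x: "x \<in> I_terms d p 2"
    then obtain r C where xr: "x = (r, C)" "r \<in> {1..2}" "C \<in> prime_cycles (mod_edges d p) p"
       "C \<notin> prime_cycles (orig_edges d p) p" "r * cyc_len C = 2"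
      unfolding I_terms_def by auto
    obtain c where c: "C = cyc_class c" "closed_path (mod_edges d p) p c" "repetition_free c"
      using xr(3) by (rule prime_class_obtain)
    have r: "r = 1 \<or> r = 2" using xr(2) by auto
    show "x \<in> (\<lambda>v. (2, cyc_class [Loop v])) ` verts d p"
    proof (cases "r = 2")
      case True
      then have "length c = 1" using xr c cyc_len_class by auto
      then obtain v where "v \<in> verts d p" "c = [Loop v]" using closed_len1 c assms by blast
      then show ?thesis using xr c True by auto
    next
      case False
      then have "length c = 2" using r xr c cyc_len_class by auto
      then obtain e1 e2 where ce: "c = [e1, e2]"
        by (metis One_nat_def Suc_1 length_0_conv length_Suc_conv)
      have cp: "\<forall>i<2. etgt p (c!i) = esrc (c!((i+1) mod 2))" "set c \<subseteq> mod_edges d p"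
        using c(2) \<open>length c = 2\<close> unfolding closed_path_def by auto
      have E: "e1 \<in> mod_edges d p" "e2 \<in> mod_edges d p" "etgt p e1 = esrc e2" "etgt p e2 = esrc e1"
        using cp(2) spec[OF cp(1), of 0] spec[OF cp(1), of 1] ce by auto
      have haslp: "\<exists>v. Loop v \<in> set c"
        using noloop_orig[OF c(2) c(3)] xr(4) c(1) by blast
      have notrep: "c \<noteq> [Loop v, Loop v]" for v
      proof
        assume "c = [Loop v, Loop v]"
        then have "c = concat (replicate 2 [Loop v])" by (simp add: numeral_2_eq_2)
        then show False using c(3) unfolding repetition_free_def by blast
      qed
      have False
      proof -
        obtain v where lv: "Loop v \<in> set c" using haslp by auto
        then have "e1 = Loop v \<or> e2 = Loop v" using ce by auto
        then show False
        proof
          assume e1: "e1 = Loop v"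
          show False
          proof (cases rule: mod_edge_cases[OF E(2)])
            case (1 w) then show False using E e1 notrep ce by auto
          next
            case (2 w i b) then show False using E e1 step_moves[of w d p i b] assms by auto
          qed
        next
          assume e2: "e2 = Loop v"
          show False
          proof (cases rule: mod_edge_cases[OF E(1)])
            case (1 w) then show False using E e2 notrep ce by auto
          next
            case (2 w i b) then show False using E e2 step_moves[of w d p i b] assms by auto
          qed
        qed
      qed
      then show ?thesis ..
    qed
  qed
next
  show "(\<lambda>v. (2, cyc_class [Loop v])) ` verts d p \<subseteq> I_terms d p 2"
    using loop_cycle_good unfolding I_terms_def by (auto simp: cyc_len_class)
qed

lemma I_all_1:
  assumes "\<forall>i<d. p i \<ge> 2"
  shows "I_all d p 1 Q = (\<Sum>v\<in>verts d p. Q v)"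
proof -
  have inj: "inj_on (\<lambda>v. (1::nat, cyc_class [Loop v])) (verts d p)"
    by (auto intro!: inj_onI dest: loop_class_inj)
  show ?thesis unfolding I_all_def I_terms_1[OF assms] sum.reindex[OF inj]
    by (simp add: cyc_weight_class)
qed

lemma I_all_2:
  assumes "\<forall>i<d. p i \<ge> 2"
  shows "I_all d p 2 Q = (\<Sum>v\<in>verts d p. (Q v)\<^sup>2) / 2"
proof -
  have inj: "inj_on (\<lambda>v. (2::nat, cyc_class [Loop v])) (verts d p)"
    by (auto intro!: inj_onI dest: loop_class_inj)
  show ?thesis unfolding I_all_def I_terms_2[OF assms] sum.reindex[OF inj]
    by (simp add: cyc_weight_class sum_divide_distrib)
qed



fun disp :: "edge \<Rightarrow> nat \<Rightarrow> int" where
  "disp (Step v i b) = (if b then unitv i else (\<lambda>k. - unitv i k))"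
| "disp (Loop v) = (\<lambda>_. 0)"

lemma edge_tele:
  assumes "e \<in> mod_edges d p" "i < d" "\<forall>i<d. p i \<ge> 2"
  shows "int (etgt p e i) - int (esrc e i) = disp e i - int (p i) * eidx p e i"
proof (cases rule: mod_edge_cases[OF assms(1)])
  case (1 v) then show ?thesis by simp
next
  case (2 v i' b)
  have vi: "v i < p i" and pi: "p i \<ge> 2" using 2 assms unfolding verts_def by auto
  show ?thesis
  proof (cases "i' = i")
    case False then show ?thesis using 2 by (simp add: unitv_def)
  next
    case True
    note T = True
    show ?thesis
    proof (cases b)
      case True
      show ?thesis
      proof (cases "v i = p i - 1")
        case True
        then have "v i + 1 = p i" using pi by linarith
        then show ?thesis using 2 T \<open>b\<close> True pi by (simp add: unitv_def of_nat_diff)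
      next
        case False
        then have "v i + 1 < p i" using vi by linarith
        then show ?thesis using 2 T \<open>b\<close> False by (simp add: unitv_def)
      qed
    next
      case False
      show ?thesis
      proof (cases "v i = 0")
        case True
        then show ?thesis using 2 T \<open>\<not>b\<close> True pi by (simp add: unitv_def of_nat_diff)
      next
        case False
        have "(v i + p i - 1) mod p i = v i - 1"
        proof -
          have "v i + p i - 1 = (v i - 1) + p i" using False by simp
          moreover have "((v i - 1) + p i) mod p i = (v i - 1) mod p i" by (rule mod_add_self2)
          moreover have "(v i - 1) mod p i = v i - 1" using vi by (intro mod_less) linarith
          ultimately show ?thesis by argo
        qed
        then show ?thesis using 2 T \<open>\<not>b\<close> False by (simp add: unitv_def of_nat_diff)
      qed
    qed
  qed
qed

lemma sum_list_nth: "sum_list (map f c) = (\<Sum>k<length c. f (c ! k))"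
  by (simp add: sum_list_sum_nth atLeast0LessThan)

lemma tele:
  assumes cp: "closed_path (mod_edges d p) p c" and "i < d" "\<forall>i<d. p i \<ge> 2"
  shows "(\<Sum>k<length c. disp (c!k) i) = int (p i) * (\<Sum>k<length c. eidx p (c!k) i)"
proof -
  let ?N = "length c"
  have N: "?N > 0" and E: "\<And>k. k < ?N \<Longrightarrow> c!k \<in> mod_edges d p"
    and T: "\<And>k. k < ?N \<Longrightarrow> etgt p (c!k) = esrc (c!((k+1) mod ?N))"
    using cp unfolding closed_path_def by auto
  have "(\<Sum>k<?N. int (etgt p (c!k) i)) = (\<Sum>k<?N. int (esrc (c!((k+1) mod ?N)) i))"
    using T by (intro sum.cong) auto
  also have "\<dots> = (\<Sum>k<?N. int (esrc (c!k) i))"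
    using sum_shift_mod[OF N, of "\<lambda>k. int (esrc (c!k) i)"] by simp
  finally have "(\<Sum>k<?N. int (etgt p (c!k) i) - int (esrc (c!k) i)) = 0"
    by (simp add: sum_subtractf)
  moreover have "(\<Sum>k<?N. int (etgt p (c!k) i) - int (esrc (c!k) i)) =
      (\<Sum>k<?N. disp (c!k) i - int (p i) * eidx p (c!k) i)"
    using edge_tele[OF E assms(2,3)] by (intro sum.cong) auto
  ultimately show ?thesis by (simp add: sum_subtractf sum_distrib_left)
qed

lemma nonneg_sum_one:
  fixes w :: "nat \<Rightarrow> int"
  assumes "finite A" "\<forall>k\<in>A. w k \<ge> 0" "sum w A = 1"
  obtains k where "k \<in> A" "w k = 1" "\<forall>k'\<in>A - {k}. w k' = 0"
proof -
  obtain k where k: "k \<in> A" "w k \<noteq> 0"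
    using assms(3) by (metis sum.neutral zero_neq_one)
  have "sum w A = w k + sum w (A - {k})" using assms(1) k(1) by (simp add: sum.remove)
  moreover have "sum w (A - {k}) \<ge> 0" using assms(2) by (intro sum_nonneg) auto
  moreover have "w k \<ge> 1" using k assms(2) by fastforce
  ultimately have "w k = 1" "sum w (A - {k}) = 0" using assms(3) by linarith+
  moreover have "\<forall>k'\<in>A - {k}. w k' = 0"
    using \<open>sum w (A - {k}) = 0\<close> assms(1,2) sum_nonneg_eq_0_iff[of "A - {k}" w] by auto
  ultimately show ?thesis using that k(1) by blast
qed

lemma disp_le1: "e \<in> mod_edges d p \<Longrightarrow> disp e j \<le> 1"
  by (cases e) (auto simp: unitv_def)

lemma struct:
  assumes cp: "closed_path (mod_edges d p) p c" and len: "length c = p j + 2" and j: "j < d"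
    and P: "\<forall>i<d. p i \<ge> 2" and lp: "\<exists>k<length c. \<exists>u. c!k = Loop u"
    and idx: "\<forall>i<d. (\<Sum>k<length c. eidx p (c!k) i) = unitv j i"
  shows "\<exists>k0 k1. k0 < k1 \<and> k1 < length c \<and> (\<forall>k<length c. (k = k0 \<or> k = k1) \<longrightarrow> (\<exists>u. c!k = Loop u))
     \<and> (\<forall>k<length c. k \<noteq> k0 \<and> k \<noteq> k1 \<longrightarrow> (\<exists>u. c!k = Step u j True))"
proof -
  let ?N = "length c"
  have E: "\<And>k. k < ?N \<Longrightarrow> c!k \<in> mod_edges d p" using cp unfolding closed_path_def by auto
  have D: "(\<Sum>k<?N. disp (c!k) i) = int (p i) * unitv j i" if "i < d" for i
    using tele[OF cp that P] idx that by simp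
  obtain k0 u0 where k0: "k0 < ?N" "c!k0 = Loop u0" using lp by auto
  define w where "w k = 1 - disp (c!k) j" for k
  have wnn: "\<forall>k\<in>{..<?N}. w k \<ge> 0" using disp_le1[OF E] unfolding w_def by auto
  have "sum w {..<?N} = int ?N - int (p j)"
    unfolding w_def using D[OF j] by (simp add: sum_subtractf unitv_def)
  then have sw: "sum w {..<?N} = 2" using len by simp
  have wk0: "w k0 = 1" unfolding w_def using k0 by simp
  have "sum w {..<?N} = w k0 + sum w ({..<?N} - {k0})" using k0 by (simp add: sum.remove)
  then have "sum w ({..<?N} - {k0}) = 1" using sw wk0 by simp
  then obtain k1 where k1: "k1 \<in> {..<?N} - {k0}" "w k1 = 1" "\<forall>k'\<in>{..<?N} - {k0} - {k1}. w k' = 0"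
    using nonneg_sum_one[of "{..<?N} - {k0}" w] wnn by auto
  have stepj: "\<exists>u. c!k = Step u j True" if "k < ?N" "k \<noteq> k0" "k \<noteq> k1" for k
  proof -
    have "w k = 0" using k1(3) that by auto
    then have "disp (c!k) j = 1" unfolding w_def by simp
    then show ?thesis by (cases "c!k") (auto simp: unitv_def split: if_splits)
  qed
  have "\<exists>u. c!k1 = Loop u"
  proof (rule ccontr)
    assume nl: "\<nexists>u. c!k1 = Loop u"
    then obtain v i b where s: "c!k1 = Step v i b" by (cases "c!k1") auto
    have "c!k1 \<in> mod_edges d p" using k1 E by auto
    then have i: "i < d" using s unfolding mod_edges_def orig_edges_def by auto
    have "disp (c!k1) j = 0" using k1(2) unfolding w_def by simp
    then have ij: "i \<noteq> j" using s by (auto simp: unitv_def split: if_splits)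
    have z: "disp (c!k) i = 0" if zk: "k < ?N" "k \<noteq> k1" for k
    proof (cases "k = k0")
      case True then show ?thesis using k0 by simp
    next
      case False
      then obtain u where "c!k = Step u j True" using stepj zk by blast
      then show ?thesis using ij by (simp add: unitv_def)
    qed
    have "(\<Sum>k<?N. disp (c!k) i) = disp (c!k1) i + (\<Sum>k\<in>{..<?N} - {k1}. disp (c!k) i)"
      using k1 sum.remove[of "{..<?N}" k1 "\<lambda>k. disp (c!k) i"] by simp
    also have "(\<Sum>k\<in>{..<?N} - {k1}. disp (c!k) i) = 0" using z by (intro sum.neutral) auto
    finally have "(\<Sum>k<?N. disp (c!k) i) = disp (c!k1) i" by simp
    moreover have "disp (c!k1) i \<noteq> 0" using s by (simp add: unitv_def)
    ultimately show False using D[OF i] ij by (simp add: unitv_def)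
  qed
  then have loops: "\<forall>k<?N. (k = k0 \<or> k = k1) \<longrightarrow> (\<exists>u. c!k = Loop u)" using k0 by auto
  have "k0 \<noteq> k1" using k1 by auto
  show ?thesis
  proof (cases "k0 < k1")
    case True then show ?thesis using loops stepj k1 by (intro exI[of _ k0] exI[of _ k1]) auto
  next
    case False then show ?thesis using loops stepj k1 k0 \<open>k0 \<noteq> k1\<close>
      by (intro exI[of _ k1] exI[of _ k0]) auto
  qed
qed



definition sfun :: "nat \<Rightarrow> nat \<Rightarrow> nat \<Rightarrow> nat" where
  "sfun k1 k2 k = k - (if k1 < k then 1 else 0) - (if k2 < k then 1 else 0)"

definition genf :: "nat \<Rightarrow> (nat \<Rightarrow> nat) \<Rightarrow> nat \<Rightarrow> nat \<Rightarrow> nat \<Rightarrow> edge" where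
  "genf j w k1 k2 k = (if k = k1 \<or> k = k2 then Loop (w(j := sfun k1 k2 k))
      else Step (w(j := sfun k1 k2 k)) j True)"

definition gen :: "nat \<Rightarrow> nat \<Rightarrow> (nat \<Rightarrow> nat) \<Rightarrow> nat \<Rightarrow> nat \<Rightarrow> edge list" where
  "gen P j w k1 k2 = map (genf j w k1 k2) [0..<P+2]"

lemma sfun_loop: "k1 < k2 \<Longrightarrow> k = k1 \<or> k = k2 \<Longrightarrow> sfun k1 k2 (Suc k) = sfun k1 k2 k"
  unfolding sfun_def by auto

lemma sfun_step: "k1 < k2 \<Longrightarrow> k \<noteq> k1 \<Longrightarrow> k \<noteq> k2 \<Longrightarrow> sfun k1 k2 (Suc k) = Suc (sfun k1 k2 k)"
  unfolding sfun_def by auto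

lemma sfun_0: "sfun k1 k2 0 = 0" unfolding sfun_def by simp

lemma sfun_k1: "k1 < k2 \<Longrightarrow> sfun k1 k2 k1 = k1" unfolding sfun_def by simp
lemma sfun_k2: "k1 < k2 \<Longrightarrow> sfun k1 k2 k2 = k2 - 1" unfolding sfun_def by simp

lemma sfun_le: "k1 < k2 \<Longrightarrow> k2 < P + 1 \<Longrightarrow> k < P + 2 \<Longrightarrow> sfun k1 k2 k \<le> P - 1"
  unfolding sfun_def by auto

lemma sfun_step_lt: "k1 < k2 \<Longrightarrow> k2 < P + 1 \<Longrightarrow> k < P + 1 \<Longrightarrow> k \<noteq> k1 \<Longrightarrow> k \<noteq> k2 \<Longrightarrow> sfun k1 k2 k < P - 1"
  unfolding sfun_def by auto

lemma sfun_last: "k1 < k2 \<Longrightarrow> k2 < P + 1 \<Longrightarrow> sfun k1 k2 (P + 1) = P - 1"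
  unfolding sfun_def by auto

lemma esrc_mod: "e \<in> mod_edges d p \<Longrightarrow> esrc e \<in> verts d p"
  by (cases rule: mod_edge_cases) auto

lemma canon:
  assumes cp: "closed_path (mod_edges d p) p c" and len: "length c = p j + 2" and j: "j < d"
    and P: "\<forall>i<d. p i \<ge> 2" and k01: "k0 < k1" "k1 < length c"
    and lps: "\<forall>k<length c. (k = k0 \<or> k = k1) \<longrightarrow> (\<exists>u. c!k = Loop u)"
    and sts: "\<forall>k<length c. k \<noteq> k0 \<and> k \<noteq> k1 \<longrightarrow> (\<exists>u. c!k = Step u j True)"
    and last: "eidx p (c!(length c - 1)) j = 1"
    and oth: "\<forall>k < length c - 1. eidx p (c!k) j = 0"
  shows "k1 < p j + 1 \<and> esrc (c!0) \<in> verts d p \<and> esrc (c!0) j = 0 \<and> c = gen (p j) j (esrc (c!0)) k0 k1"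
proof -
  let ?N = "length c"
  define w where "w = esrc (c!0)"
  have E: "\<And>k. k < ?N \<Longrightarrow> c!k \<in> mod_edges d p"
    and T: "\<And>k. k < ?N \<Longrightarrow> etgt p (c!k) = esrc (c!((k+1) mod ?N))"
    using cp unfolding closed_path_def by auto
  have pj: "p j \<ge> 2" using P j by auto
  have k1N: "k1 \<noteq> ?N - 1"
  proof
    assume "k1 = ?N - 1"
    then obtain u where "c!(?N - 1) = Loop u" using lps k01 by auto
    then show False using last by simp
  qed
  then have k1lt: "k1 < p j + 1" using k01 len by linarith
  have "?N - 1 < ?N" "?N - 1 \<noteq> k0" "?N - 1 \<noteq> k1" using len k01 k1N by auto
  then obtain v where v: "c!(?N - 1) = Step v j True" using sts by blast
  have vj: "v j = p j - 1" using last v by (auto simp: unitv_def split: if_splits)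
  have "etgt p (c!(?N - 1)) = esrc (c!0)" using T[of "?N - 1"] len by simp
  then have wv: "w = v(j := 0)" using v vj pj unfolding w_def by simp
  then have wj: "w j = 0" by simp
  have wV: "w \<in> verts d p" unfolding w_def using E[of 0] len esrc_mod by simp
  have src: "esrc (c!k) = w(j := sfun k0 k1 k)" if "k < ?N" for k
    using that
  proof (induction k)
    case 0
    have "w(j := 0) = w" using wj by (simp add: fun_upd_idem)
    then show ?case using w_def by (simp add: sfun_0)
  next
    case (Suc k)
    have kN: "k < ?N" and k1': "k < ?N - 1" using Suc by auto
    have IH: "esrc (c!k) = w(j := sfun k0 k1 k)" using Suc kN by auto
    have tg: "esrc (c!(Suc k)) = etgt p (c!k)" using T[OF kN] Suc by simp
    show ?case
    proof (cases "k = k0 \<or> k = k1")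
      case True
      then obtain u where u: "c!k = Loop u" using lps kN by auto
      then show ?thesis using tg IH sfun_loop[OF k01(1) True] by simp
    next
      case False
      then obtain u where u: "c!k = Step u j True" using sts kN by auto
      have uV: "u \<in> verts d p" using esrc_mod[OF E[OF kN]] u by simp
      have uj: "u j = sfun k0 k1 k" using IH u by simp
      have "u j < p j" using uV j unfolding verts_def by auto
      moreover have "u j \<noteq> p j - 1" using oth k1' u by (auto simp: unitv_def split: if_splits)
      ultimately have "(u j + 1) mod p j = u j + 1" by simp
      then show ?thesis using tg IH u uj sfun_step[OF k01(1)] False by simp
    qed
  qed
  have "c = gen (p j) j w k0 k1"
  proof (rule nth_equalityI)
    show "length c = length (gen (p j) j w k0 k1)" using len unfolding gen_def by simp
  next
    fix k assume k: "k < length c"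
    have gk: "gen (p j) j w k0 k1 ! k = genf j w k0 k1 k" using k len unfolding gen_def
      by (simp del: upt_Suc)
    show "c ! k = gen (p j) j w k0 k1 ! k"
    proof (cases "k = k0 \<or> k = k1")
      case True
      then obtain u where u: "c!k = Loop u" using lps k by auto
      then show ?thesis using src[OF k] gk True unfolding genf_def by simp
    next
      case False
      then obtain u where u: "c!k = Step u j True" using sts k by auto
      then show ?thesis using src[OF k] gk False unfolding genf_def by simp
    qed
  qed
  then show ?thesis using k1lt wV wj unfolding w_def by simp
qed



lemma genf_src: "esrc (genf j w k1 k2 k) = w(j := sfun k1 k2 k)"
  unfolding genf_def by simp

lemma gen_len: "length (gen P j w k1 k2) = P + 2"
  unfolding gen_def by simp

lemma gen_nth: "k < P + 2 \<Longrightarrow> gen P j w k1 k2 ! k = genf j w k1 k2 k"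
  unfolding gen_def by (simp del: upt_Suc)

lemma vert_upd: "w \<in> verts d p \<Longrightarrow> j < d \<Longrightarrow> s < p j \<Longrightarrow> w(j := s) \<in> verts d p"
  unfolding verts_def by auto

locale genctx =
  fixes d :: nat and p :: "nat \<Rightarrow> nat" and j :: nat and w :: "nat \<Rightarrow> nat" and k1 k2 :: nat
  assumes j: "j < d" and P: "\<forall>i<d. p i \<ge> 2" and wV: "w \<in> verts d p" and wj: "w j = 0"
    and k12: "k1 < k2" and k2: "k2 < p j + 1"
begin

abbreviation "N \<equiv> p j + 2"
abbreviation "g \<equiv> gen (p j) j w k1 k2"
abbreviation "s \<equiv> sfun k1 k2"

lemma pj: "p j \<ge> 2" using P j by auto

lemma genf_mod: "k < N \<Longrightarrow> genf j w k1 k2 k \<in> mod_edges d p"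
proof -
  assume k: "k < N"
  have "s k < p j" using sfun_le[OF k12 k2 k] pj by linarith
  then have "w(j := s k) \<in> verts d p" using vert_upd wV j by blast
  then show ?thesis unfolding genf_def mod_edges_def orig_edges_def using j by auto
qed

lemma genf_tgt:
  assumes k: "k < N"
  shows "etgt p (genf j w k1 k2 k) = esrc (genf j w k1 k2 ((k + 1) mod N))"
proof (cases "k = N - 1")
  case True
  then have "(k + 1) mod N = 0" by simp
  moreover have "k \<noteq> k1" "k \<noteq> k2" using True k12 k2 by auto
  moreover have "s k = p j - 1" using True sfun_last[OF k12 k2] by simp
  moreover have "(p j - 1 + 1) mod p j = 0" using pj by simp
  moreover have "w(j := 0) = w" using wj by (simp add: fun_upd_idem)
  ultimately show ?thesis unfolding genf_def by (simp add: sfun_0)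
next
  case False
  then have k1': "(k + 1) mod N = Suc k" using k by simp
  show ?thesis
  proof (cases "k = k1 \<or> k = k2")
    case True
    then show ?thesis using k1' sfun_loop[OF k12 True] unfolding genf_def by simp
  next
    case F: False
    have "s k < p j - 1" using sfun_step_lt[OF k12 k2, of k] F False k by simp
    then have "(s k + 1) mod p j = s k + 1" by simp
    then show ?thesis using k1' sfun_step[OF k12] F unfolding genf_def by simp
  qed
qed

lemma gen_closed: "closed_path (mod_edges d p) p g"
proof -
  have "g \<noteq> []" using gen_len[of "p j" j w k1 k2] by auto
  moreover have "set g \<subseteq> mod_edges d p" unfolding gen_def using genf_mod by auto
  moreover have "\<forall>i<length g. etgt p (g ! i) = esrc (g ! ((i + 1) mod length g))"
    using genf_tgt by (simp add: gen_len gen_nth)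
  ultimately show ?thesis unfolding closed_path_def by blast
qed

lemma genf_eidx:
  assumes k: "k < N"
  shows "eidx p (genf j w k1 k2 k) = (if k = N - 1 then unitv j else (\<lambda>_. 0))"
proof (cases "k = k1 \<or> k = k2")
  case True
  then have "k \<noteq> N - 1" using k12 k2 by auto
  then show ?thesis using True unfolding genf_def by auto
next
  case False
  show ?thesis
  proof (cases "k = N - 1")
    case True
    then have "s k = p j - 1" using sfun_last[OF k12 k2] by simp
    then show ?thesis using True False unfolding genf_def by simp
  next
    case F: False
    have "s k < p j - 1" using sfun_step_lt[OF k12 k2, of k] F False k by simp
    then show ?thesis using F False unfolding genf_def by simp
  qed
qed

lemma gen_index: "(\<lambda>i. \<Sum>e\<leftarrow>g. eidx p e i) = unitv j"
proof
  fix i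
  have "(\<Sum>e\<leftarrow>g. eidx p e i) = (\<Sum>k<N. eidx p (genf j w k1 k2 k) i)"
    by (simp add: sum_list_nth gen_len gen_nth)
  also have "\<dots> = (\<Sum>k<N. if k = N - 1 then unitv j i else 0)"
    using genf_eidx by (intro sum.cong) auto
  also have "\<dots> = unitv j i" by (simp add: sum.delta)
  finally show "(\<Sum>e\<leftarrow>g. eidx p e i) = unitv j i" .
qed

lemma gen_weight: "(\<Prod>e\<leftarrow>g. eweight Q e) = Q (w(j := k1)) * Q (w(j := k2 - 1))"
proof -
  have pl: "prod_list (map f xs) = (\<Prod>k<length xs. f (xs ! k))" for f :: "edge \<Rightarrow> real" and xs
    by (simp add: prod.list_conv_set_nth atLeast0LessThan)
  have "(\<Prod>e\<leftarrow>g. eweight Q e) = (\<Prod>k<N. eweight Q (genf j w k1 k2 k))"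
    by (simp add: pl gen_len gen_nth)
  also have "\<dots> = (\<Prod>k\<in>{k1, k2}. eweight Q (genf j w k1 k2 k))"
    by (rule prod.mono_neutral_right) (use k12 k2 in \<open>auto simp: genf_def\<close>)
  also have "\<dots> = Q (w(j := k1)) * Q (w(j := k2 - 1))"
    using k12 by (simp add: genf_def sfun_k1 sfun_k2)
  finally show ?thesis .
qed

lemma gen_loop: "Loop (w(j := k1)) \<in> set g"
proof -
  have "g ! k1 = Loop (w(j := k1))" using k12 k2 by (simp add: gen_nth genf_def sfun_k1)
  moreover have "k1 < length g" using k12 k2 by (simp add: gen_len)
  ultimately show ?thesis using nth_mem by metis
qed

lemma eidx_nz: "k < N \<Longrightarrow> eidx p (g ! k) j \<noteq> 0 \<longleftrightarrow> k = N - 1"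
  using genf_eidx by (simp add: gen_nth unitv_def)

lemma gen_repfree: "repetition_free g"
  unfolding repetition_free_def
proof
  assume "\<exists>r u. 2 \<le> r \<and> g = concat (replicate r u)"
  then obtain r u where r: "2 \<le> r" and gu: "g = concat (replicate r u)" by auto
  obtain r' where r': "r = Suc r'" using r by (cases r) auto
  define c' where "c' = concat (replicate r' u)"
  have g1: "g = u @ c'" unfolding c'_def gu r' by simp
  have g2: "g = c' @ u" unfolding c'_def gu r' by (simp add: replicate_append_same[symmetric] del: replicate_append_same)
  have lc: "length g = r * length u" unfolding gu by (induction r) auto
  have NN: "N = r * length u" using lc by (simp add: gen_len)
  have lu: "length u > 0" using NN by (cases "length u = 0") auto
  define k where "k = N - 1 - length u"
  have "2 * length u \<le> r * length u" using r by (rule mult_le_mono1)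
  then have lul: "length u < N" using NN lu by linarith
  have "length g = length u + length c'" using g1 by simp
  then have "length c' = N - length u" by (simp add: gen_len)
  then have kc: "k < length c'" using lu lul unfolding k_def by linarith
  have "g ! (k + length u) = c' ! k" using g1 by (simp add: nth_append)
  moreover have "g ! k = c' ! k" using g2 kc by (simp add: nth_append)
  moreover have "k + length u = N - 1" using lul unfolding k_def by simp
  ultimately have "g ! k = g ! (N - 1)" by simp
  moreover have "eidx p (g ! (N - 1)) j \<noteq> 0" using eidx_nz by simp
  moreover have "k < N" "k \<noteq> N - 1" using lu lul unfolding k_def by linarith+
  ultimately show False using eidx_nz by metis
qed

end



definition Prm :: "nat \<Rightarrow> (nat \<Rightarrow> nat) \<Rightarrow> nat \<Rightarrow> ((nat \<Rightarrow> nat) \<times> nat \<times> nat) set" where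
  "Prm d p j = (SIGMA w:{w \<in> verts d p. w j = 0}. SIGMA k2:{..<p j + 1}. {..<k2})"

definition hmap :: "(nat \<Rightarrow> nat) \<Rightarrow> nat \<Rightarrow> ((nat \<Rightarrow> nat) \<times> nat \<times> nat) \<Rightarrow> nat \<times> edge list set" where
  "hmap p j x = (case x of (w, k2, k1) \<Rightarrow> (1, cyc_class (gen (p j) j w k1 k2)))"

lemma Prm_iff: "(w, k2, k1) \<in> Prm d p j \<longleftrightarrow> w \<in> verts d p \<and> w j = 0 \<and> k1 < k2 \<and> k2 < p j + 1"
  unfolding Prm_def by auto

lemma T_sup:
  assumes j: "j < d" and P: "\<forall>i<d. p i \<ge> 2"
  shows "hmap p j ` Prm d p j \<subseteq> {x \<in> I_terms d p (p j + 2). (\<lambda>i. int (fst x) * cyc_index p (snd x) i) = unitv j}"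
proof
  fix x assume "x \<in> hmap p j ` Prm d p j"
  then obtain w k1 k2 where x: "x = hmap p j (w, k2, k1)" and pr: "(w, k2, k1) \<in> Prm d p j" by auto
  then interpret genctx d p j w k1 k2 using j P by unfold_locales (auto simp: Prm_iff)
  have "cyc_class g \<in> prime_cycles (mod_edges d p) p" using gen_closed gen_repfree unfolding prime_cycles_def by auto
  moreover have "cyc_class g \<notin> prime_cycles (orig_edges d p) p" using gen_loop by (rule loop_not_orig)
  moreover have "cyc_len (cyc_class g) = N" by (simp add: cyc_len_class gen_len)
  moreover have "cyc_index p (cyc_class g) = unitv j" using gen_index by (simp add: cyc_index_class)
  ultimately show "x \<in> {x \<in> I_terms d p (p j + 2). (\<lambda>i. int (fst x) * cyc_index p (snd x) i) = unitv j}"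
    unfolding x hmap_def I_terms_def by auto
qed

lemma rot_last:
  assumes "k < length c" shows "rotate (k + 1) c ! (length c - 1) = c ! k"
proof -
  have "k + 1 + (length c - 1) = k + length c" using assms by linarith
  then have "(k + 1 + (length c - 1)) mod length c = k" using assms by simp
  moreover have "length c - 1 < length c" using assms by simp
  ultimately show ?thesis using nth_rotate[of "length c - 1" c "k + 1"] by (simp del: rotate_Suc)
qed

lemma T_sub:
  assumes j: "j < d" and P: "\<forall>i<d. p i \<ge> 2"
  shows "{x \<in> I_terms d p (p j + 2). (\<lambda>i. int (fst x) * cyc_index p (snd x) i) = unitv j} \<subseteq> hmap p j ` Prm d p j"
proof
  fix x assume xT: "x \<in> {x \<in> I_terms d p (p j + 2). (\<lambda>i. int (fst x) * cyc_index p (snd x) i) = unitv j}"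
  then obtain r C where xr: "x = (r, C)" "r \<in> {1..p j + 2}" "C \<in> prime_cycles (mod_edges d p) p"
       "C \<notin> prime_cycles (orig_edges d p) p" "r * cyc_len C = p j + 2"
       and ix: "(\<lambda>i. int r * cyc_index p C i) = unitv j"
    unfolding I_terms_def by auto
  obtain c where c: "C = cyc_class c" "closed_path (mod_edges d p) p c" "repetition_free c"
    using xr(3) by (rule prime_class_obtain)
  have ixc: "int r * (\<Sum>e\<leftarrow>c. eidx p e i) = unitv j i" for i
    using fun_cong[OF ix, of i] c(1) by (simp add: cyc_index_class)
  have "int r * (\<Sum>e\<leftarrow>c. eidx p e j) = 1" using ixc[of j] by (simp add: unitv_def)
  then have r1: "r = 1" using xr(2) by (simp add: pos_zmult_eq_1_iff)
  then have ixc1: "(\<Sum>e\<leftarrow>c. eidx p e i) = unitv j i" for i using ixc[of i] by simp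
  have len: "length c = p j + 2" using xr(5) r1 c(1) by (simp add: cyc_len_class)
  let ?N = "length c"
  have "\<exists>v. Loop v \<in> set c" using noloop_orig[OF c(2) c(3)] xr(4) c(1) by blast
  then obtain v where "Loop v \<in> set c" by auto
  then obtain kl where kl: "kl < ?N" "c ! kl = Loop v" by (metis in_set_conv_nth)
  have idx: "\<forall>i<d. (\<Sum>k<?N. eidx p (c!k) i) = unitv j i" using ixc1 by (simp add: sum_list_nth)
  obtain k0 k1 where st: "k0 < k1" "k1 < ?N" "\<forall>k<?N. (k = k0 \<or> k = k1) \<longrightarrow> (\<exists>u. c!k = Loop u)"
     "\<forall>k<?N. k \<noteq> k0 \<and> k \<noteq> k1 \<longrightarrow> (\<exists>u. c!k = Step u j True)"
    using struct[OF c(2) len j P _ idx] kl by blast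
  have nn: "\<forall>k\<in>{..<?N}. eidx p (c!k) j \<ge> 0"
  proof
    fix k assume "k \<in> {..<?N}"
    then have "(\<exists>u. c!k = Loop u) \<or> (\<exists>u. c!k = Step u j True)" using st by auto
    then show "eidx p (c!k) j \<ge> 0" by (auto simp: unitv_def)
  qed
  have "(\<Sum>k<?N. eidx p (c!k) j) = 1" using idx j by (simp add: unitv_def)
  then obtain ks where ks: "ks \<in> {..<?N}" "eidx p (c!ks) j = 1" using nonneg_sum_one[OF _ nn] by blast
  define c' where "c' = rotate (ks + 1) c"
  have c'cp: "closed_path (mod_edges d p) p c'" unfolding c'_def using c(2) by (rule closed_path_rotate)
  have c'cl: "cyc_class c' = C" unfolding c'_def c(1) by (rule cyc_class_rotate)
  have len': "length c' = p j + 2" unfolding c'_def using len by simp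
  have ixc': "(\<Sum>e\<leftarrow>c'. eidx p e i) = unitv j i" for i unfolding c'_def using ixc1[of i] sum_list_rotate_map[of "\<lambda>e. eidx p e i" "ks+1" c] by simp
  have idx': "\<forall>i<d. (\<Sum>k<length c'. eidx p (c'!k) i) = unitv j i" using ixc' by (simp add: sum_list_nth)
  have "Loop v \<in> set c'" unfolding c'_def using \<open>Loop v \<in> set c\<close> by simp
  then obtain kl' where kl': "kl' < length c'" "c' ! kl' = Loop v" by (metis in_set_conv_nth)
  obtain k0' k1' where st': "k0' < k1'" "k1' < length c'" "\<forall>k<length c'. (k = k0' \<or> k = k1') \<longrightarrow> (\<exists>u. c'!k = Loop u)"
     "\<forall>k<length c'. k \<noteq> k0' \<and> k \<noteq> k1' \<longrightarrow> (\<exists>u. c'!k = Step u j True)"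
    using struct[OF c'cp len' j P _ idx'] kl' by blast
  have nn': "\<forall>k\<in>{..<length c'}. eidx p (c'!k) j \<ge> 0"
  proof
    fix k assume "k \<in> {..<length c'}"
    then have "(\<exists>u. c'!k = Loop u) \<or> (\<exists>u. c'!k = Step u j True)" using st' by auto
    then show "eidx p (c'!k) j \<ge> 0" by (auto simp: unitv_def)
  qed
  have lastc': "eidx p (c' ! (length c' - 1)) j = 1"
    using rot_last[of ks c] ks unfolding c'_def by simp
  have "(\<Sum>k<length c'. eidx p (c'!k) j) = 1" using idx' j by (simp add: unitv_def)
  then obtain kt where kt: "kt \<in> {..<length c'}" "eidx p (c'!kt) j = 1"
       "\<forall>k'\<in>{..<length c'} - {kt}. eidx p (c'!k') j = 0"
    using nonneg_sum_one[OF _ nn'] by blast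
  have "kt = length c' - 1"
  proof (rule ccontr)
    assume "kt \<noteq> length c' - 1"
    then have "eidx p (c' ! (length c' - 1)) j = 0" using kt(3) len' by auto
    then show False using lastc' by simp
  qed
  then have oth: "\<forall>k < length c' - 1. eidx p (c'!k) j = 0" using kt(3) by auto
  have can: "k1' < p j + 1 \<and> esrc (c'!0) \<in> verts d p \<and> esrc (c'!0) j = 0 \<and> c' = gen (p j) j (esrc (c'!0)) k0' k1'"
    using canon[OF c'cp len' j P st'(1,2,3,4) lastc' oth] .
  then have "(esrc (c'!0), k1', k0') \<in> Prm d p j" using st'(1) by (simp add: Prm_iff)
  moreover have "x = hmap p j (esrc (c'!0), k1', k0')"
    using xr(1) r1 c'cl can unfolding hmap_def by simp
  ultimately show "x \<in> hmap p j ` Prm d p j" by blast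
qed



context genctx begin
lemma is_loop_iff: "k < N \<Longrightarrow> (\<exists>u. g!k = Loop u) \<longleftrightarrow> (k = k1 \<or> k = k2)"
  by (simp add: gen_nth genf_def)
lemma src0: "esrc (g!0) = w"
proof -
  have "w(j := 0) = w" using wj by (simp add: fun_upd_idem)
  then show ?thesis by (simp add: gen_nth genf_src sfun_0)
qed
end

lemma mod_shift_last:
  fixes m N :: nat
  assumes "N > 0" "(m + (N - 1)) mod N = N - 1"
  shows "m mod N = 0"
proof (rule ccontr)
  assume t: "m mod N \<noteq> 0"
  define t where "t = m mod N"
  have tN: "t < N" "t \<ge> 1" using assms(1) t unfolding t_def by auto
  have e1: "(m + (N - 1)) mod N = (t + (N - 1)) mod N" unfolding t_def by (simp add: mod_add_left_eq)
  have e2: "t + (N - 1) = (t - 1) + N" using tN by simp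
  have e3: "((t - 1) + N) mod N = t - 1" using tN by (simp only: mod_add_self2) simp
  have "t - 1 = N - 1" using e1 e2 e3 assms(2) by simp
  then show False using tN by linarith
qed

lemma hmap_inj:
  assumes j: "j < d" and P: "\<forall>i<d. p i \<ge> 2"
  shows "inj_on (hmap p j) (Prm d p j)"
proof (rule inj_onI)
  fix a b assume a: "a \<in> Prm d p j" and b: "b \<in> Prm d p j" and h: "hmap p j a = hmap p j b"
  obtain w k2 k1 where a': "a = (w, k2, k1)" by (cases a) auto
  obtain w' k2' k1' where b': "b = (w', k2', k1')" by (cases b) auto
  interpret A: genctx d p j w k1 k2 using a a' j P by unfold_locales (auto simp: Prm_iff)
  interpret B: genctx d p j w' k1' k2' using b b' j P by unfold_locales (auto simp: Prm_iff)
  have "cyc_class A.g = cyc_class B.g" using h unfolding a' b' hmap_def by simp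
  then obtain m where m: "B.g = rotate m A.g" using cyc_class_eq_rot by blast
  have lA: "length A.g = A.N" by (simp add: gen_len)
  have "B.g ! (A.N - 1) = A.g ! ((m + (A.N - 1)) mod A.N)" using m lA by (simp add: nth_rotate)
  moreover have "eidx p (B.g ! (A.N - 1)) j \<noteq> 0" using B.eidx_nz by simp
  moreover have "(m + (A.N - 1)) mod A.N < A.N" by simp
  ultimately have "(m + (A.N - 1)) mod A.N = A.N - 1" using A.eidx_nz by metis
  then have "m mod A.N = 0" by (intro mod_shift_last) auto
  then have gg: "B.g = A.g" using m lA by (metis rotate_conv_mod rotate0 id_apply)
  have ww: "w' = w" using A.src0 B.src0 gg by simp
  have L: "(k = k1 \<or> k = k2) \<longleftrightarrow> (k = k1' \<or> k = k2')" if "k < A.N" for k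
    using A.is_loop_iff[OF that] B.is_loop_iff[OF that] gg by simp
  have r1: "k1 < A.N" "k2 < A.N" "k1' < A.N" "k2' < A.N" using A.k12 A.k2 B.k12 B.k2 by auto
  have "k1 = k1' \<or> k1 = k2'" "k2 = k1' \<or> k2 = k2'" "k1' = k1 \<or> k1' = k2" "k2' = k1 \<or> k2' = k2"
    using L[OF r1(1)] L[OF r1(2)] L[OF r1(3)] L[OF r1(4)] by auto
  then have "k1 = k1' \<and> k2 = k2'" using A.k12 B.k12 by linarith
  then show "a = b" using a' b' ww by simp
qed

lemma I_idx_val:
  assumes j: "j < d" and P: "\<forall>i<d. p i \<ge> 2"
  shows "I_idx d p (p j + 2) (unitv j) Q =
    (\<Sum>w\<in>{w \<in> verts d p. w j = 0}. \<Sum>k2<p j + 1. \<Sum>k1<k2. Q (w(j := k1)) * Q (w(j := k2 - 1)))"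
proof -
  have T: "{x \<in> I_terms d p (p j + 2). (\<lambda>i. int (fst x) * cyc_index p (snd x) i) = unitv j} = hmap p j ` Prm d p j"
    using T_sub[OF j P] T_sup[OF j P] by blast
  have "I_idx d p (p j + 2) (unitv j) Q = (\<Sum>x\<in>Prm d p j. (1 / real (fst (hmap p j x))) * cyc_weight Q (snd (hmap p j x)) ^ fst (hmap p j x))"
    unfolding I_idx_def T sum.reindex[OF hmap_inj[OF j P]] by simp
  also have "\<dots> = (\<Sum>x\<in>Prm d p j. (case x of (w, k2, k1) \<Rightarrow> Q (w(j := k1)) * Q (w(j := k2 - 1))))"
  proof (rule sum.cong)
    fix x assume x: "x \<in> Prm d p j"
    obtain w k2 k1 where x': "x = (w, k2, k1)" by (cases x) auto
    interpret genctx d p j w k1 k2 using x x' j P by unfold_locales (auto simp: Prm_iff)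
    show "(1 / real (fst (hmap p j x))) * cyc_weight Q (snd (hmap p j x)) ^ fst (hmap p j x) =
      (case x of (w, k2, k1) \<Rightarrow> Q (w(j := k1)) * Q (w(j := k2 - 1)))"
      unfolding x' hmap_def by (simp add: cyc_weight_class gen_weight)
  qed simp
  also have "\<dots> = (\<Sum>w\<in>{w \<in> verts d p. w j = 0}. \<Sum>k2<p j + 1. \<Sum>k1<k2. Q (w(j := k1)) * Q (w(j := k2 - 1)))"
    unfolding Prm_def
    by (subst sum.Sigma[symmetric]) (auto simp: finite_verts sum.Sigma[symmetric] intro!: sum.cong)
  finally show ?thesis .
qed

lemma tri_sum:
  fixes x :: "nat \<Rightarrow> real"
  shows "2 * (\<Sum>b<n. \<Sum>a\<le>b. x a * x b) = (\<Sum>a<n. x a)\<^sup>2 + (\<Sum>a<n. (x a)\<^sup>2)"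
proof (induction n)
  case 0 then show ?case by simp
next
  case (Suc n)
  have "(\<Sum>a\<le>n. x a * x n) = (\<Sum>a<n. x a) * x n + (x n)\<^sup>2"
    by (simp add: lessThan_Suc_atMost[symmetric] sum_distrib_right power2_eq_square)
  then show ?case using Suc by (simp add: algebra_simps power2_eq_square)
qed

lemma shift_tri:
  fixes F :: "nat \<Rightarrow> nat \<Rightarrow> real"
  shows "(\<Sum>k2<P + 1. \<Sum>k1<k2. F k1 (k2 - 1)) = (\<Sum>b<P. \<Sum>a\<le>b. F a b)"
proof -
  have "(\<Sum>k2<Suc P. \<Sum>k1<k2. F k1 (k2 - 1)) = (\<Sum>k1<0. F k1 (0 - 1)) + (\<Sum>b<P. \<Sum>k1<Suc b. F k1 (Suc b - 1))"
    by (rule sum.lessThan_Suc_shift)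
  then show ?thesis by (simp add: lessThan_Suc_atMost)
qed



definition PiZ :: "nat set \<Rightarrow> (nat \<Rightarrow> nat set) \<Rightarrow> (nat \<Rightarrow> nat) set" where
  "PiZ I A = {n. (\<forall>i\<in>I. n i \<in> A i) \<and> (\<forall>i. i \<notin> I \<longrightarrow> n i = 0)}"

lemma PiZ_empty: "PiZ {} A = {\<lambda>_. 0}"
  unfolding PiZ_def by auto

lemma PiZ_insert:
  assumes "x \<notin> I"
  shows "PiZ (insert x I) A = (\<lambda>(n, a). n(x := a)) ` (PiZ I A \<times> A x)"
proof
  show "PiZ (insert x I) A \<subseteq> (\<lambda>(n, a). n(x := a)) ` (PiZ I A \<times> A x)"
  proof
    fix n assume n: "n \<in> PiZ (insert x I) A"
    have "n = (\<lambda>(n, a). n(x := a)) (n(x := 0), n x)" by simp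
    moreover have "(n(x := 0), n x) \<in> PiZ I A \<times> A x" using n assms unfolding PiZ_def by auto
    ultimately show "n \<in> (\<lambda>(n, a). n(x := a)) ` (PiZ I A \<times> A x)" by blast
  qed
  show "(\<lambda>(n, a). n(x := a)) ` (PiZ I A \<times> A x) \<subseteq> PiZ (insert x I) A"
    using assms unfolding PiZ_def by auto
qed

lemma PiZ_inj:
  assumes "x \<notin> I"
  shows "inj_on (\<lambda>(n, a). n(x := a)) (PiZ I A \<times> A x)"
proof (rule inj_onI)
  fix u v assume u: "u \<in> PiZ I A \<times> A x" and v: "v \<in> PiZ I A \<times> A x"
    and e: "(\<lambda>(n, a). n(x := a)) u = (\<lambda>(n, a). n(x := a)) v"
  obtain n a where u': "u = (n, a)" by (cases u) auto
  obtain n' a' where v': "v = (n', a')" by (cases v) auto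
  have "n x = 0" "n' x = 0" using u v u' v' assms unfolding PiZ_def by auto
  moreover have "n(x := a) = n'(x := a')" using e u' v' by simp
  ultimately have "a = a'" "n = n'"
    by (metis fun_upd_same, metis fun_upd_idem fun_upd_upd)
  then show "u = v" using u' v' by simp
qed

lemma piz_sum_prod:
  fixes g :: "nat \<Rightarrow> nat \<Rightarrow> 'b::comm_semiring_1"
  assumes "finite I"
  shows "(\<Sum>n\<in>PiZ I A. \<Prod>i\<in>I. g i (n i)) = (\<Prod>i\<in>I. \<Sum>a\<in>A i. g i a)"
  using assms
proof (induction I rule: finite_induct)
  case empty then show ?case by (simp add: PiZ_empty)
next
  case (insert x I)
  have "(\<Sum>n\<in>PiZ (insert x I) A. \<Prod>i\<in>insert x I. g i (n i))
      = (\<Sum>y\<in>PiZ I A \<times> A x. \<Prod>i\<in>insert x I. g i ((case y of (n, a) \<Rightarrow> n(x := a)) i))"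
    unfolding PiZ_insert[OF insert(2)] by (subst sum.reindex[OF PiZ_inj[OF insert(2)]]) (simp add: comp_def)
  also have "\<dots> = (\<Sum>y\<in>PiZ I A \<times> A x. g x (snd y) * (\<Prod>i\<in>I. g i (fst y i)))"
  proof (rule sum.cong)
    fix y assume "y \<in> PiZ I A \<times> A x"
    obtain n a where y: "y = (n, a)" by (cases y) auto
    have "(\<Prod>i\<in>I. g i ((n(x := a)) i)) = (\<Prod>i\<in>I. g i (n i))"
      using insert(2) by (intro prod.cong) auto
    then show "(\<Prod>i\<in>insert x I. g i ((case y of (n, a) \<Rightarrow> n(x := a)) i)) = g x (snd y) * (\<Prod>i\<in>I. g i (fst y i))"
      using insert(1,2) y by simp
  qed simp
  also have "\<dots> = (\<Sum>n\<in>PiZ I A. \<Sum>a\<in>A x. g x a * (\<Prod>i\<in>I. g i (n i)))"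
    by (simp add: sum.cartesian_product split_beta)
  also have "\<dots> = (\<Sum>a\<in>A x. g x a) * (\<Sum>n\<in>PiZ I A. \<Prod>i\<in>I. g i (n i))"
    by (simp add: sum_distrib_left sum_distrib_right mult.commute sum.swap[of _ "A x"])
  also have "\<dots> = (\<Prod>i\<in>insert x I. \<Sum>a\<in>A i. g i a)" using insert by simp
  finally show ?case .
qed

lemma verts_PiZ: "verts d p = PiZ {..<d} (\<lambda>i. {..<p i})"
  unfolding verts_def PiZ_def by auto

lemma W_PiZ: "j < d \<Longrightarrow> p j > 0 \<Longrightarrow> {n \<in> verts d p. n j = 0} = PiZ ({..<d} - {j}) (\<lambda>i. {..<p i})"
  unfolding verts_def PiZ_def by auto

lemma cis_sum: "finite I \<Longrightarrow> cis (\<Sum>i\<in>I. f i) = (\<Prod>i\<in>I. cis (f i))"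
  by (induction I rule: finite_induct) (auto simp: cis_mult[symmetric])

lemma exp_to_cis:
  fixes d :: nat and l n p :: "nat \<Rightarrow> nat"
  shows "exp (- 2 * complex_of_real pi * \<i> * (\<Sum>j<d. of_nat (l j * n j) / of_nat (p j)))
    = (\<Prod>i<d. cis (-2 * pi * real (l i * n i) / real (p i)))"
proof -
  define S :: complex where "S = (\<Sum>j<d. of_nat (l j * n j) / of_nat (p j))"
  have "complex_of_real (\<Sum>i<d. -2 * pi * real (l i * n i) / real (p i))
      = (\<Sum>i<d. complex_of_real (-2 * pi * real (l i * n i) / real (p i)))" by (rule of_real_sum)
  also have "\<dots> = (\<Sum>i<d. -2 * complex_of_real pi * (of_nat (l i * n i) / of_nat (p i)))"
    by (intro sum.cong) auto
  also have "\<dots> = -2 * complex_of_real pi * S" unfolding S_def by (simp add: sum_distrib_left)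
  finally have R: "complex_of_real (\<Sum>i<d. -2 * pi * real (l i * n i) / real (p i)) = -2 * complex_of_real pi * S" .
  have "exp (- 2 * complex_of_real pi * \<i> * S) = exp (\<i> * complex_of_real (\<Sum>i<d. -2 * pi * real (l i * n i) / real (p i)))"
    unfolding R by (simp add: algebra_simps)
  also have "\<dots> = cis (\<Sum>i<d. -2 * pi * real (l i * n i) / real (p i))" by (simp add: cis_conv_exp)
  also have "\<dots> = (\<Prod>i<d. cis (-2 * pi * real (l i * n i) / real (p i)))" by (intro cis_sum finite_lessThan)
  finally show ?thesis unfolding S_def .
qed

lemma orth1:
  assumes P: "P \<ge> 1" and b: "b < P" and b': "b' < P"
  shows "(\<Sum>a<P. cis (-2 * pi * real (a * b) / real P) * cnj (cis (-2 * pi * real (a * b') / real P)))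
     = (if b = b' then of_nat P else 0)"
proof -
  define z where "z = cis (2 * pi * (real b' - real b) / real P)"
  have t: "cis (-2 * pi * real (a * b) / real P) * cnj (cis (-2 * pi * real (a * b') / real P)) = z ^ a" for a
    unfolding z_def by (simp add: cis_cnj cis_mult DeMoivre algebra_simps add_divide_distrib diff_divide_distrib)
  show ?thesis
  proof (cases "b = b'")
    case True
    then have "z = 1" unfolding z_def by simp
    then show ?thesis using t True by simp
  next
    case False
    have zP: "z ^ P = 1"
    proof -
      have "real P \<noteq> 0" using P by simp
      then have "real P * (2 * pi * (real b' - real b) / real P) = 2 * pi * (real b' - real b)" by simp
      then have "z ^ P = cis (2 * pi * (real b' - real b))" unfolding z_def DeMoivre by metis
      also have "\<dots> = cis (2 * pi * of_int (int b' - int b))" by simp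
      also have "\<dots> = 1" by (rule cis_multiple_2pi) simp
      finally show ?thesis .
    qed
    have z1: "z \<noteq> 1"
    proof
      assume "z = 1"
      then have "cos (2 * pi * (real b' - real b) / real P) = 1" unfolding z_def
        by (metis Re_complex_of_real cis.sel(1) one_complex.sel(1))
      then obtain n :: int where n: "2 * pi * (real b' - real b) / real P = real_of_int n * 2 * pi"
        using cos_one_2pi_int by blast
      have Pn: "real P \<noteq> 0" using P by simp
      have "(2 * pi) * (real b' - real b) = (2 * pi) * (real_of_int n * real P)"
        using n Pn by (simp add: field_simps)
      then have "real b' - real b = n * real P" using pi_gt_zero by simp
      then have "int b' - int b = n * int P" by (metis of_int_eq_iff of_int_mult of_int_of_nat_eq of_int_diff)
      moreover have "\<bar>int b' - int b\<bar> < int P" using b b' by linarith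
      ultimately have "n = 0"
      proof -
        assume e: "int b' - int b = n * int P" and lt: "\<bar>int b' - int b\<bar> < int P"
        show "n = 0"
        proof (rule ccontr)
          assume "n \<noteq> 0"
          then have "\<bar>n\<bar> \<ge> 1" by linarith
          then have "\<bar>n\<bar> * int P \<ge> 1 * int P" by (intro mult_right_mono) auto
          then have "\<bar>n * int P\<bar> \<ge> int P" by (simp add: abs_mult)
          then show False using e lt by simp
        qed
      qed
      then show False using \<open>int b' - int b = n * int P\<close> False by simp
    qed
    have "(\<Sum>a<P. z ^ a) = 0" using sum_gp_strict[of z P] z1 zP by simp
    then show ?thesis using t False by simp
  qed
qed



abbreviation "Xc d p n m \<equiv> (\<Prod>i<d. cis (-2 * pi * real (n i * m i) / real (p i)))"

lemma Qhat_X: "Qhat d p Q n = (1 / of_nat (period_prod d p)) * (\<Sum>m\<in>verts d p. Xc d p n m * complex_of_real (Q m))"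
proof -
  have e: "complex_of_real (-2 * pi) = -2 * complex_of_real pi" by simp
  show ?thesis unfolding Qhat_def e exp_to_cis ..
qed

lemma char_orth:
  assumes P: "\<forall>i<d. p i \<ge> 2" and I: "I \<subseteq> {..<d}" and m: "m \<in> verts d p" and m': "m' \<in> verts d p"
  shows "(\<Sum>n\<in>PiZ I (\<lambda>i. {..<p i}). Xc d p n m * cnj (Xc d p n m'))
       = (\<Prod>i\<in>I. if m i = m' i then of_nat (p i) else 0)"
proof -
  define G where "G i a = cis (-2 * pi * real (a * m i) / real (p i)) * cnj (cis (-2 * pi * real (a * m' i) / real (p i)))" for i a
  have fin: "finite I" using I finite_subset by blast
  have "Xc d p n m * cnj (Xc d p n m') = (\<Prod>i\<in>I. G i (n i))" if n: "n \<in> PiZ I (\<lambda>i. {..<p i})" for n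
  proof -
    have "Xc d p n m * cnj (Xc d p n m') = (\<Prod>i<d. G i (n i))"
      unfolding G_def by (simp add: prod.distrib)
    also have "\<dots> = (\<Prod>i\<in>I. G i (n i))"
    proof (rule prod.mono_neutral_right)
      show "\<forall>i\<in>{..<d} - I. G i (n i) = 1" using n unfolding PiZ_def G_def by auto
    qed (use I in auto)
    finally show ?thesis .
  qed
  then have "(\<Sum>n\<in>PiZ I (\<lambda>i. {..<p i}). Xc d p n m * cnj (Xc d p n m'))
     = (\<Sum>n\<in>PiZ I (\<lambda>i. {..<p i}). \<Prod>i\<in>I. G i (n i))" by (rule sum.cong[OF refl])
  also have "\<dots> = (\<Prod>i\<in>I. \<Sum>a\<in>{..<p i}. G i a)" using fin by (rule piz_sum_prod)
  also have "\<dots> = (\<Prod>i\<in>I. if m i = m' i then of_nat (p i) else 0)"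
  proof (rule prod.cong[OF refl])
    fix i assume "i \<in> I"
    then have i: "i < d" using I by auto
    have "m i < p i" "m' i < p i" using m m' i unfolding verts_def by auto
    moreover have "p i \<ge> 1" using P i by auto
    ultimately show "(\<Sum>a\<in>{..<p i}. G i a) = (if m i = m' i then of_nat (p i) else 0)"
      unfolding G_def using orth1[of "p i" "m i" "m' i"] by (simp add: mult.commute)
  qed
  finally show ?thesis .
qed

lemma parseval:
  assumes P: "\<forall>i<d. p i \<ge> 2" and I: "I \<subseteq> {..<d}"
  shows "(\<Sum>n\<in>PiZ I (\<lambda>i. {..<p i}). Qhat d p Q n * cnj (Qhat d p Q n))
    = (1 / of_nat (period_prod d p))\<^sup>2 * (\<Sum>m\<in>verts d p. \<Sum>m'\<in>verts d p.
         complex_of_real (Q m) * complex_of_real (Q m') * (\<Prod>i\<in>I. if m i = m' i then of_nat (p i) else 0))"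
proof -
  define c :: complex where "c = 1 / of_nat (period_prod d p)"
  define V where "V = verts d p"
  define S where "S = PiZ I (\<lambda>i. {..<p i})"
  have cc: "cnj c = c" unfolding c_def by simp
  have "Qhat d p Q n * cnj (Qhat d p Q n) = c\<^sup>2 * (\<Sum>m\<in>V. \<Sum>m'\<in>V.
      complex_of_real (Q m) * complex_of_real (Q m') * (Xc d p n m * cnj (Xc d p n m')))" for n
  proof -
    have "Qhat d p Q n * cnj (Qhat d p Q n) = (c * (\<Sum>m\<in>V. Xc d p n m * complex_of_real (Q m))) *
        (c * (\<Sum>m'\<in>V. cnj (Xc d p n m') * complex_of_real (Q m')))"
      unfolding Qhat_X c_def[symmetric] V_def[symmetric] by (simp add: cc)
    also have "\<dots> = c\<^sup>2 * ((\<Sum>m\<in>V. Xc d p n m * complex_of_real (Q m)) * (\<Sum>m'\<in>V. cnj (Xc d p n m') * complex_of_real (Q m')))"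
      by (simp add: power2_eq_square algebra_simps)
    also have "(\<Sum>m\<in>V. Xc d p n m * complex_of_real (Q m)) * (\<Sum>m'\<in>V. cnj (Xc d p n m') * complex_of_real (Q m'))
       = (\<Sum>m\<in>V. \<Sum>m'\<in>V. complex_of_real (Q m) * complex_of_real (Q m') * (Xc d p n m * cnj (Xc d p n m')))"
      by (simp add: sum_product algebra_simps)
    finally show ?thesis .
  qed
  then have "(\<Sum>n\<in>S. Qhat d p Q n * cnj (Qhat d p Q n)) = c\<^sup>2 * (\<Sum>n\<in>S. \<Sum>m\<in>V. \<Sum>m'\<in>V.
      complex_of_real (Q m) * complex_of_real (Q m') * (Xc d p n m * cnj (Xc d p n m')))"
    by (simp add: sum_distrib_left)
  also have "(\<Sum>n\<in>S. \<Sum>m\<in>V. \<Sum>m'\<in>V. complex_of_real (Q m) * complex_of_real (Q m') * (Xc d p n m * cnj (Xc d p n m')))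
     = (\<Sum>m\<in>V. \<Sum>m'\<in>V. \<Sum>n\<in>S. complex_of_real (Q m) * complex_of_real (Q m') * (Xc d p n m * cnj (Xc d p n m')))"
    by (simp add: sum.swap[of _ S] sum.swap[of _ S V])
  also have "\<dots> = (\<Sum>m\<in>V. \<Sum>m'\<in>V. complex_of_real (Q m) * complex_of_real (Q m') * (\<Prod>i\<in>I. if m i = m' i then of_nat (p i) else 0))"
    unfolding sum_distrib_left[symmetric] S_def using char_orth[OF P I] unfolding V_def by (intro sum.cong refl) auto
  finally show ?thesis unfolding c_def S_def V_def .
qed



lemma pp_pos: "\<forall>i<d. p i \<ge> 2 \<Longrightarrow> period_prod d p > 0"
  unfolding period_prod_def by (intro prod_pos) auto

lemma prod_if_eq:
  assumes "finite I"
  shows "(\<Prod>i\<in>I. if m i = m' i then (of_nat (p i) :: complex) else 0)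
     = (if \<forall>i\<in>I. m i = m' i then of_nat (\<Prod>i\<in>I. p i) else 0)"
proof (cases "\<forall>i\<in>I. m i = m' i")
  case True then show ?thesis by (simp add: of_nat_prod)
next
  case False
  then obtain i where "i \<in> I" "m i \<noteq> m' i" by auto
  then show ?thesis using assms False by (simp add: prod_zero_iff) (metis)
qed

lemma decomp:
  fixes f :: "(nat \<Rightarrow> nat) \<Rightarrow> 'b::comm_monoid_add"
  assumes j: "j < d" and pj: "p j > 0"
  shows "(\<Sum>v\<in>verts d p. f v) = (\<Sum>w\<in>{w \<in> verts d p. w j = 0}. \<Sum>a<p j. f (w(j := a)))"
proof -
  have ins: "{..<d} = insert j ({..<d} - {j})" using j by auto
  have V: "verts d p = (\<lambda>(n, a). n(j := a)) ` (PiZ ({..<d} - {j}) (\<lambda>i. {..<p i}) \<times> {..<p j})"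
    unfolding verts_PiZ by (subst ins) (rule PiZ_insert, simp)
  have inj: "inj_on (\<lambda>(n, a). n(j := a)) (PiZ ({..<d} - {j}) (\<lambda>i. {..<p i}) \<times> {..<p j})"
    using PiZ_inj[of j "{..<d} - {j}" "\<lambda>i. {..<p i}"] by simp
  have W: "{w \<in> verts d p. w j = 0} = PiZ ({..<d} - {j}) (\<lambda>i. {..<p i})" using W_PiZ[of j d p] j pj by blast
  show ?thesis unfolding W unfolding V sum.reindex[OF inj]
    by (simp add: sum.cartesian_product split_beta)
qed

lemma part1:
  assumes P: "\<forall>i<d. p i \<ge> 2"
  shows "complex_of_real (I_all d p 1 Q) = of_nat (period_prod d p) * Qhat d p Q (\<lambda>_. 0)"
proof -
  have pp: "(of_nat (period_prod d p) :: complex) \<noteq> 0" using pp_pos[OF P] by simp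
  have "Qhat d p Q (\<lambda>_. 0) = (1 / of_nat (period_prod d p)) * (\<Sum>n\<in>verts d p. complex_of_real (Q n))"
    unfolding Qhat_def by simp
  then show ?thesis unfolding I_all_1[OF P] using pp by simp
qed

lemma norm_sum_complex:
  "complex_of_real (\<Sum>n\<in>S. (cmod (z n))\<^sup>2) = (\<Sum>n\<in>S. z n * cnj (z n))"
  unfolding of_real_sum by (intro sum.cong refl) (rule complex_norm_square)

lemma part2_aux:
  assumes P: "\<forall>i<d. p i \<ge> 2"
  shows "(\<Sum>n\<in>verts d p. (cmod (Qhat d p Q n))\<^sup>2) = (\<Sum>v\<in>verts d p. (Q v)\<^sup>2) / real (period_prod d p)"
proof -
  define pp where "pp = period_prod d p"
  have ppn: "(of_nat pp :: complex) \<noteq> 0" using pp_pos[OF P] unfolding pp_def by simp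
  have eq: "(\<forall>i\<in>{..<d}. m i = m' i) \<longleftrightarrow> m = m'" if mm: "m \<in> verts d p" "m' \<in> verts d p" for m m'
  proof
    assume H: "\<forall>i\<in>{..<d}. m i = m' i"
    have "m x = m' x" for x using mm H unfolding verts_def by (cases "x < d") auto
    then show "m = m'" by auto
  qed auto
  have "complex_of_real (\<Sum>n\<in>verts d p. (cmod (Qhat d p Q n))\<^sup>2)
      = (\<Sum>n\<in>PiZ {..<d} (\<lambda>i. {..<p i}). Qhat d p Q n * cnj (Qhat d p Q n))"
    unfolding norm_sum_complex verts_PiZ ..
  also have "\<dots> = (1 / of_nat pp)\<^sup>2 * (\<Sum>m\<in>verts d p. \<Sum>m'\<in>verts d p.
         complex_of_real (Q m) * complex_of_real (Q m') * (if m = m' then of_nat pp else 0))"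
    unfolding parseval[OF P order_refl] pp_def
    by (intro arg_cong2[where f="(*)"] refl sum.cong) (auto simp: prod_if_eq eq period_prod_def)
  also have "\<dots> = (1 / of_nat pp)\<^sup>2 * (\<Sum>m\<in>verts d p. complex_of_real ((Q m)\<^sup>2) * of_nat pp)"
    by (simp add: finite_verts if_distrib sum.delta power2_eq_square cong: if_cong)
  also have "\<dots> = (1 / of_nat pp)\<^sup>2 * of_nat pp * complex_of_real (\<Sum>v\<in>verts d p. (Q v)\<^sup>2)"
    unfolding of_real_sum sum_distrib_left sum_distrib_right by (simp add: mult_ac)
  also have "\<dots> = complex_of_real ((\<Sum>v\<in>verts d p. (Q v)\<^sup>2) / real pp)"
    using ppn by (simp add: power2_eq_square field_simps)
  finally show ?thesis unfolding pp_def using of_real_eq_iff by blast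
qed



lemma inner_R:
  fixes Q :: "(nat \<Rightarrow> nat) \<Rightarrow> real"
  assumes j: "j < d" and P: "\<forall>i<d. p i \<ge> 2" and m: "m \<in> verts d p"
  shows "(\<Sum>m'\<in>verts d p. Q m' * (if \<forall>i\<in>{..<d} - {j}. m i = m' i then 1 else 0)) = (\<Sum>a<p j. Q (m(j := a)))"
proof -
  have pj: "p j > 0" using P j by auto
  let ?W = "{w \<in> verts d p. w j = 0}"
  have m0: "m(j := 0) \<in> ?W" using m j pj unfolding verts_def by auto
  have iff: "(\<forall>i\<in>{..<d} - {j}. m i = (w(j := a)) i) \<longleftrightarrow> w = m(j := 0)" if w: "w \<in> ?W" for w a
  proof
    assume H: "\<forall>i\<in>{..<d} - {j}. m i = (w(j := a)) i"
    have "w x = (m(j := 0)) x" for x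
    proof (cases "x = j")
      case True then show ?thesis using w by simp
    next
      case False
      then show ?thesis using H w m unfolding verts_def by (cases "x < d") auto
    qed
    then show "w = m(j := 0)" by auto
  qed auto
  have "(\<Sum>m'\<in>verts d p. Q m' * (if \<forall>i\<in>{..<d} - {j}. m i = m' i then 1 else 0))
      = (\<Sum>w\<in>?W. \<Sum>a<p j. Q (w(j := a)) * (if \<forall>i\<in>{..<d} - {j}. m i = (w(j := a)) i then 1 else 0))"
    by (rule decomp[where j=j and d=d and p=p, OF j pj])
  also have "\<dots> = (\<Sum>w\<in>?W. if w = m(j := 0) then (\<Sum>a<p j. Q (w(j := a))) else 0)"
    using iff by (intro sum.cong refl) auto
  also have "\<dots> = (\<Sum>a<p j. Q ((m(j := 0))(j := a)))"
    using m0 finite_verts[of d p] by (simp add: sum.delta')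
  finally show ?thesis by simp
qed

lemma part3_aux:
  assumes j: "j < d" and P: "\<forall>i<d. p i \<ge> 2"
  shows "(\<Sum>n\<in>{n \<in> verts d p. n j = 0}. (cmod (Qhat d p Q n))\<^sup>2)
     = (\<Sum>w\<in>{w \<in> verts d p. w j = 0}. (\<Sum>a<p j. Q (w(j := a)))\<^sup>2) / (real (period_prod d p) * real (p j))"
proof -
  define pp where "pp = period_prod d p"
  define I where "I = {..<d} - {j}"
  define q where "q = (\<Prod>i\<in>I. p i)"
  define R where "R m = (\<Sum>a<p j. Q (m(j := a)))" for m
  have pj: "p j > 0" using P j by auto
  have ppq: "pp = p j * q" unfolding pp_def q_def I_def period_prod_def
    using j by (metis finite_lessThan lessThan_iff prod.remove)
  have ppn: "(of_nat pp :: complex) \<noteq> 0" using pp_pos[OF P] unfolding pp_def by simp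
  have W: "{n \<in> verts d p. n j = 0} = PiZ I (\<lambda>i. {..<p i})" unfolding I_def using W_PiZ[of j d p] j pj by blast
  have rsum: "(\<Sum>m\<in>verts d p. \<Sum>m'\<in>verts d p. Q m * Q m' * (if \<forall>i\<in>I. m i = m' i then 1 else 0))
      = (\<Sum>w\<in>{w \<in> verts d p. w j = 0}. (R w)\<^sup>2)"
  proof -
    have "(\<Sum>m\<in>verts d p. \<Sum>m'\<in>verts d p. Q m * Q m' * (if \<forall>i\<in>I. m i = m' i then 1 else 0))
       = (\<Sum>m\<in>verts d p. Q m * R m)"
      unfolding I_def R_def using inner_R[where Q=Q, OF j P]
      by (intro sum.cong refl) (simp add: sum_distrib_left[symmetric] mult.assoc)
    also have "\<dots> = (\<Sum>w\<in>{w \<in> verts d p. w j = 0}. \<Sum>a<p j. Q (w(j := a)) * R (w(j := a)))"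
      by (rule decomp[where j=j and d=d and p=p, OF j pj])
    also have "\<dots> = (\<Sum>w\<in>{w \<in> verts d p. w j = 0}. (R w)\<^sup>2)"
      unfolding R_def by (simp add: sum_distrib_right[symmetric] power2_eq_square)
    finally show ?thesis .
  qed
  have "complex_of_real (\<Sum>n\<in>{n \<in> verts d p. n j = 0}. (cmod (Qhat d p Q n))\<^sup>2)
      = (\<Sum>n\<in>PiZ I (\<lambda>i. {..<p i}). Qhat d p Q n * cnj (Qhat d p Q n))"
    unfolding norm_sum_complex W ..
  also have "\<dots> = (1 / of_nat pp)\<^sup>2 * (\<Sum>m\<in>verts d p. \<Sum>m'\<in>verts d p.
         complex_of_real (Q m) * complex_of_real (Q m') * (\<Prod>i\<in>I. if m i = m' i then of_nat (p i) else 0))"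
    unfolding pp_def by (rule parseval[OF P]) (auto simp: I_def)
  also have "(\<Sum>m\<in>verts d p. \<Sum>m'\<in>verts d p.
         complex_of_real (Q m) * complex_of_real (Q m') * (\<Prod>i\<in>I. if m i = m' i then of_nat (p i) else 0))
      = (\<Sum>m\<in>verts d p. \<Sum>m'\<in>verts d p. of_nat q * complex_of_real (Q m * Q m' * (if \<forall>i\<in>I. m i = m' i then 1 else 0)))"
    unfolding q_def by (intro sum.cong refl) (simp add: prod_if_eq I_def)
  also have "\<dots> = of_nat q * complex_of_real (\<Sum>w\<in>{w \<in> verts d p. w j = 0}. (R w)\<^sup>2)"
    unfolding rsum[symmetric] of_real_sum sum_distrib_left ..
  also have "(1 / of_nat pp)\<^sup>2 * (of_nat q * complex_of_real (\<Sum>w\<in>{w \<in> verts d p. w j = 0}. (R w)\<^sup>2))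
      = complex_of_real ((\<Sum>w\<in>{w \<in> verts d p. w j = 0}. (R w)\<^sup>2) / (real pp * real (p j)))"
    using ppn pj unfolding ppq by (simp add: power2_eq_square field_simps)
  finally show ?thesis unfolding pp_def R_def using of_real_eq_iff by blast
qed



theorem corollary2p23:
  fixes d :: nat and p :: "nat \<Rightarrow> nat" and Q :: "(nat \<Rightarrow> nat) \<Rightarrow> real"
  assumes "d \<ge> 1" and "\<forall>j<d. p j \<ge> 2"
  shows "(complex_of_real (I_all d p 1 Q) = of_nat (period_prod d p) * Qhat d p Q (\<lambda>_. 0)) \<and>
    (I_all d p 2 Q = real (period_prod d p) / 2 * (\<Sum>n\<in>verts d p. (cmod (Qhat d p Q n))\<^sup>2)) \<and>
    (\<forall>j<d. I_idx d p (p j + 2) (unitv j) Q =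
           I_all d p 2 Q + real (period_prod d p) * real (p j) / 2 *
             (\<Sum>n\<in>{n \<in> verts d p. n j = 0}. (cmod (Qhat d p Q n))\<^sup>2))"
proof (intro conjI allI impI)
  have P: "\<forall>i<d. p i \<ge> 2" using assms(2) by blast
  have ppos: "real (period_prod d p) > 0" using pp_pos[OF P] by simp
  show "complex_of_real (I_all d p 1 Q) = of_nat (period_prod d p) * Qhat d p Q (\<lambda>_. 0)"
    by (rule part1[OF P])
  show I2: "I_all d p 2 Q = real (period_prod d p) / 2 * (\<Sum>n\<in>verts d p. (cmod (Qhat d p Q n))\<^sup>2)"
    unfolding I_all_2[OF P] part2_aux[OF P] using ppos by (simp add: field_simps)
  fix j assume j: "j < d"
  have pj: "p j > 0" using P j by auto
  define R where "R w = (\<Sum>a<p j. Q (w(j := a)))" for w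
  let ?W = "{w \<in> verts d p. w j = 0}"
  have "I_idx d p (p j + 2) (unitv j) Q = (\<Sum>w\<in>?W. \<Sum>b<p j. \<Sum>a\<le>b. Q (w(j := a)) * Q (w(j := b)))"
    unfolding I_idx_val[OF j P]
  proof (rule sum.cong[OF refl])
    fix w
    show "(\<Sum>k2<p j + 1. \<Sum>k1<k2. Q (w(j := k1)) * Q (w(j := k2 - 1))) = (\<Sum>b<p j. \<Sum>a\<le>b. Q (w(j := a)) * Q (w(j := b)))"
      by (rule shift_tri[where F = "\<lambda>a b. Q (w(j := a)) * Q (w(j := b))"])
  qed
  also have "\<dots> = (\<Sum>w\<in>?W. ((R w)\<^sup>2 + (\<Sum>a<p j. (Q (w(j := a)))\<^sup>2)) / 2)"
  proof (rule sum.cong[OF refl])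
    fix w
    have "2 * (\<Sum>b<p j. \<Sum>a\<le>b. Q (w(j := a)) * Q (w(j := b))) = (R w)\<^sup>2 + (\<Sum>a<p j. (Q (w(j := a)))\<^sup>2)"
      unfolding R_def by (rule tri_sum)
    then show "(\<Sum>b<p j. \<Sum>a\<le>b. Q (w(j := a)) * Q (w(j := b))) = ((R w)\<^sup>2 + (\<Sum>a<p j. (Q (w(j := a)))\<^sup>2)) / 2"
      by (simp add: field_simps)
  qed
  also have "\<dots> = (\<Sum>w\<in>?W. \<Sum>a<p j. (Q (w(j := a)))\<^sup>2) / 2 + (\<Sum>w\<in>?W. (R w)\<^sup>2) / 2"
    by (simp add: sum_divide_distrib[symmetric] sum.distrib add_divide_distrib)
  also have "(\<Sum>w\<in>?W. \<Sum>a<p j. (Q (w(j := a)))\<^sup>2) / 2 = I_all d p 2 Q"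
    unfolding I_all_2[OF P] decomp[where j=j and d=d and p=p, OF j pj] ..
  also have "(\<Sum>w\<in>?W. (R w)\<^sup>2) / 2 = real (period_prod d p) * real (p j) / 2 *
             (\<Sum>n\<in>?W. (cmod (Qhat d p Q n))\<^sup>2)"
    unfolding part3_aux[OF j P] R_def using ppos pj by (simp add: field_simps)
  finally show "I_idx d p (p j + 2) (unitv j) Q =
           I_all d p 2 Q + real (period_prod d p) * real (p j) / 2 *
             (\<Sum>n\<in>{n \<in> verts d p. n j = 0}. (cmod (Qhat d p Q n))\<^sup>2)" .
qed


end
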